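(* Let $k\ge 2$ and let $\mathcal{C}$ be an optimum distance full flag code on $\mathbb{F}_q^{2k}$. Then $|\mathcal{C}|\le q^k+1$, with equality if and only if the $k$-projected code $\mathcal{C}_k$ is a $k$-spread of $\mathbb{F}_q^{2k}$.
   Context: $q$ is a prime power. For subspaces $\mathcal{U},\mathcal{V}$, $d_S(\mathcal{U},\mathcal{V})=\dim(\mathcal{U}+\mathcal{V})-\dim(\mathcal{U}\cap\mathcal{V})$. A full flag on $\mathbb{F}_q^{2k}$ is a tuple $(\mathcal{F}_1,\ldots,\mathcal{F}_{2k-1})$ of subspaces with $\mathcal{F}_1\subsetneq\cdots\subsetneq\mathcal{F}_{2k-1}$ and $\dim\mathcal{F}_i=i$; a full flag code is a set of at least two full flags, with distance $d_f(\mathcal{C})=\min_{\mathcal{F}\ne\mathcal{F}'}\sum_i d_S(\mathcal{F}_i,\mathcal{F}'_i)$; it is an optimum distance full flag code if $d_f(\mathcal{C})=2k^2$ (the maximum possible value). The $k$-projected code is $\mathcal{C}_k=\{\mathcal{F}_k:\mathcal{F}\in\mathcal{C}\}$. A $k$-spread of $\mathbb{F}_q^{2k}$ is a set of $k$-dimensional subspaces pairwise intersecting trivially, of cardinality $q^k+1$. *)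

theory Defs
  imports "HOL-Analysis.Analysis" "HOL-Library.FuncSet"
begin

text \<open>Ambient space: F_q^N modelled as 'a ^ 'n with 'a a finite field (q = CARD('a),
 automatically a prime power) and N = CARD('n).\<close>

definition subspace_dist :: "('a::field ^ 'n) set \<Rightarrow> ('a ^ 'n) set \<Rightarrow> nat" where
  "subspace_dist U V = vec.dim (vec.span (U \<union> V)) - vec.dim (U \<inter> V)"

definition full_flag :: "nat \<Rightarrow> (nat \<Rightarrow> ('a::field ^ 'n) set) \<Rightarrow> bool" where
  "full_flag N F \<longleftrightarrow> F \<in> extensional {1..<N}
     \<and> (\<forall>i\<in>{1..<N}. vec.subspace (F i) \<and> vec.dim (F i) = i)
     \<and> (\<forall>i\<in>{1..<N}. \<forall>j\<in>{1..<N}. i < j \<longrightarrow> F i \<subset> F j)"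

definition flag_dist :: "nat \<Rightarrow> (nat \<Rightarrow> ('a::field ^ 'n) set) \<Rightarrow> (nat \<Rightarrow> ('a ^ 'n) set) \<Rightarrow> nat" where
  "flag_dist N F G = (\<Sum>i\<in>{1..<N}. subspace_dist (F i) (G i))"

definition full_flag_code :: "nat \<Rightarrow> (nat \<Rightarrow> ('a::field ^ 'n) set) set \<Rightarrow> bool" where
  "full_flag_code N C \<longleftrightarrow> 2 \<le> card C \<and> (\<forall>F\<in>C. full_flag N F)"

definition flag_code_dist :: "nat \<Rightarrow> (nat \<Rightarrow> ('a::field ^ 'n) set) set \<Rightarrow> nat" where
  "flag_code_dist N C = Min {flag_dist N F G | F G. F \<in> C \<and> G \<in> C \<and> F \<noteq> G}"

definition optimum_distance_full_flag_code :: "nat \<Rightarrow> (nat \<Rightarrow> ('a::field ^ 'n) set) set \<Rightarrow> bool" where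
  "optimum_distance_full_flag_code k C \<longleftrightarrow>
     full_flag_code (2*k) C \<and> flag_code_dist (2*k) C = 2 * k^2"

definition projected_code :: "nat \<Rightarrow> (nat \<Rightarrow> ('a::field ^ 'n) set) set \<Rightarrow> ('a ^ 'n) set set" where
  "projected_code i C = (\<lambda>F. F i) ` C"

definition is_spread :: "nat \<Rightarrow> ('a::{field,finite} ^ 'n) set set \<Rightarrow> bool" where
  "is_spread k S \<longleftrightarrow> (\<forall>U\<in>S. vec.subspace U \<and> vec.dim U = k)
     \<and> (\<forall>U\<in>S. \<forall>V\<in>S. U \<noteq> V \<longrightarrow> U \<inter> V = {0})
     \<and> card S = CARD('a)^k + 1"

end

theory Submission
  imports Defs
begin

lemma grass:
  fixes U V :: "('a::field ^ 'n) set"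
  assumes "vec.subspace U" "vec.subspace V"
  shows "vec.dim (vec.span (U \<union> V)) + vec.dim (U \<inter> V) = vec.dim U + vec.dim V"
proof -
  have "vec.span (U \<union> V) = {x + y |x y. x \<in> U \<and> y \<in> V}"
  proof -
    have "vec.span U = U" "vec.span V = V" using assms vec.span_eq_iff by blast+
    have "vec.span (U \<union> V) = {x + y |x y. x \<in> vec.span U \<and> y \<in> vec.span V}" by (rule vec.span_Un)
    then show ?thesis by (simp only: \<open>vec.span U = U\<close> \<open>vec.span V = V\<close>)
  qed
  then show ?thesis using vec.dim_sums_Int[OF assms] by simp
qed

lemma dist_bound:
  fixes U V :: "('a::field ^ 'n) set"
  assumes "vec.subspace U" "vec.subspace V" "vec.dim U = i" "vec.dim V = i"
  shows "subspace_dist U V \<le> 2 * min i (CARD('n) - i)"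
proof -
  have "vec.dim (vec.span (U \<union> V)) \<le> CARD('n)" by (rule dim_subset_UNIV_cart_gen)
  then show ?thesis using grass[OF assms(1,2)] assms(3,4) unfolding subspace_dist_def by linarith
qed

lemma dist_full:
  fixes U V :: "('a::field ^ 'n) set"
  assumes "vec.subspace U" "vec.subspace V" "vec.dim U = i" "vec.dim V = i"
    and "subspace_dist U V \<ge> 2 * i" "CARD('n) = 2 * i"
  shows "U \<inter> V = {0}"
proof -
  have "vec.dim (vec.span (U \<union> V)) \<le> CARD('n)" by (rule dim_subset_UNIV_cart_gen)
  then have "vec.dim (U \<inter> V) = 0"
    using grass[OF assms(1,2)] assms(3-6) unfolding subspace_dist_def by linarith
  then have "U \<inter> V \<subseteq> {0}" by simp
  moreover have "0 \<in> U \<inter> V" using assms(1,2) vec.subspace_0 by blast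
  ultimately show ?thesis by blast
qed

lemma card_subspace:
  fixes U :: "('a::{field,finite} ^ 'n) set"
  assumes "vec.subspace U"
  shows "card U = CARD('a) ^ vec.dim U"
proof -
  obtain B where B: "B \<subseteq> U" "vec.independent B" "U \<subseteq> vec.span B" "card B = vec.dim U"
    using vec.basis_exists by blast
  have fB: "finite B" using B(2) vec.finiteI_independent by blast
  have spB: "vec.span B = U" using B(1,3) assms vec.span_minimal by blast
  define f where "f = (\<lambda>u. \<Sum>v\<in>B. u v *s v)"
  have img: "f ` (B \<rightarrow>\<^sub>E UNIV) = U"
  proof
    show "f ` (B \<rightarrow>\<^sub>E UNIV) \<subseteq> U"
      using spB vec.span_finite[OF fB] unfolding f_def by auto
  next
    show "U \<subseteq> f ` (B \<rightarrow>\<^sub>E UNIV)"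
    proof
      fix x assume "x \<in> U"
      then obtain u where x: "x = (\<Sum>v\<in>B. u v *s v)"
        using spB vec.span_finite[OF fB] by auto
      have "x = f (restrict u B)" unfolding x f_def by (rule sum.cong) auto
      then show "x \<in> f ` (B \<rightarrow>\<^sub>E UNIV)" by auto
    qed
  qed
  have inj: "inj_on f (B \<rightarrow>\<^sub>E UNIV)"
  proof
    fix u w assume u: "u \<in> B \<rightarrow>\<^sub>E UNIV" and w: "w \<in> B \<rightarrow>\<^sub>E UNIV" and eq: "f u = f w"
    have "(\<Sum>v\<in>B. (u v - w v) *s v) = 0"
      using eq unfolding f_def by (simp add: vector_sub_rdistrib sum_subtractf)
    moreover have ind: "\<forall>c. (\<Sum>v\<in>B. c v *s v) = 0 \<longrightarrow> (\<forall>v\<in>B. c v = 0)"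
      using B(2) vec.independent_explicit by blast
    ultimately have "\<forall>v\<in>B. u v - w v = 0" using spec[OF ind, of "\<lambda>v. u v - w v"] by simp
    then show "u = w" using u w by (auto simp: PiE_def extensional_def fun_eq_iff)
  qed
  have "card U = card (B \<rightarrow>\<^sub>E (UNIV::'a set))"
    using card_image[OF inj] img by simp
  also have "\<dots> = CARD('a) ^ card B" using fB by (simp add: card_PiE)
  finally show ?thesis using B(4) by simp
qed

lemma sum_min: "(\<Sum>i\<in>{1..<2*k}. 2*min i (2*k-i)) = 2*(k::nat)^2"
proof (induction k)
  case 0 then show ?case by simp
next
  case (Suc k)
  have A: "{1..<2*Suc k} = insert (2*k+1) (insert (2*k) {1..<2*k})" if "k>0" using that by auto
  have B: "(\<Sum>i\<in>{1..<2*k}. 2*min i (2*Suc k-i)) = (\<Sum>i\<in>{1..<2*k}. 2*min i (2*k-i)) + (\<Sum>i\<in>{k+1..<2*k}. 4)"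
  proof -
    have "(\<Sum>i\<in>{1..<2*k}. 2*min i (2*Suc k-i)) = (\<Sum>i\<in>{1..<2*k}. 2*min i (2*k-i) + (if i > k then 4 else 0))"
      by (rule sum.cong[OF refl]) (auto simp: min_def)
    also have "\<dots> = (\<Sum>i\<in>{1..<2*k}. 2*min i (2*k-i)) + (\<Sum>i\<in>{1..<2*k}. (if i > k then 4 else 0))"
      by (simp add: sum.distrib)
    also have "(\<Sum>i\<in>{1..<2*k}. (if i > k then 4 else 0)) = (\<Sum>i\<in>{k+1..<2*k}. (4::nat))"
      by (rule sum.mono_neutral_cong_right) auto
    finally show ?thesis .
  qed
  show ?case
  proof (cases "k = 0")
    case True then show ?thesis by (simp add: numeral_2_eq_2)
  next
    case False
    then show ?thesis using A[of] B Suc.IH by (simp add: power2_eq_square algebra_simps)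
  qed
qed

lemma partial_spread:
  fixes S :: "('a::{field,finite} ^ 'n) set set"
  assumes N: "CARD('n) = 2*k" and k: "k \<ge> 1"
    and sub: "\<forall>U\<in>S. vec.subspace U \<and> vec.dim U = k"
    and disj: "\<forall>U\<in>S. \<forall>V\<in>S. U \<noteq> V \<longrightarrow> U \<inter> V = {0}"
  shows "card S \<le> CARD('a)^k + 1"
proof -
  define q where "q = CARD('a)"
  define m where "m = q^k"
  have fS: "finite S" by (rule finite_subset[of _ UNIV]) auto
  have "card {0::'a, 1} \<le> CARD('a)" by (rule card_mono) auto
  then have q2: "q \<ge> 2" unfolding q_def by simp
  have "q^k \<ge> q" using k q2 by (simp add: self_le_power)
  then have m2: "m \<ge> 2" using q2 unfolding m_def by linarith
  have cU: "card U = m" if "U \<in> S" for U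
    using card_subspace[of U] sub that unfolding m_def q_def by simp
  have "card (\<Union>U\<in>S. U - {0}) = (\<Sum>U\<in>S. card (U - {0}))"
    by (rule card_UN_disjoint) (use fS disj in auto)
  also have "\<dots> = (\<Sum>U\<in>S. m - 1)"
  proof (rule sum.cong[OF refl])
    fix U assume "U \<in> S"
    then have "0 \<in> U" using sub vec.subspace_0 by blast
    then show "card (U - {0}) = m - 1" using cU[OF \<open>U \<in> S\<close>] by (simp add: card_Diff_singleton)
  qed
  also have "\<dots> = card S * (m - 1)" by simp
  finally have e1: "card (\<Union>U\<in>S. U - {0}) = card S * (m - 1)" .
  have "card (\<Union>U\<in>S. U - {0}) \<le> card (UNIV - {0::'a^'n})" by (rule card_mono) auto
  also have "\<dots> = q^(2*k) - 1" by (simp add: card_Diff_singleton N q_def)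
  also have "\<dots> = m * m - 1" unfolding m_def by (simp add: power_mult power2_eq_square mult.commute)
  also have "\<dots> = (m + 1) * (m - 1)" using m2 by (cases m) (auto simp: algebra_simps)
  finally have "card (\<Union>U\<in>S. U - {0}) \<le> (m + 1) * (m - 1)" .
  then have "card S * (m - 1) \<le> (m + 1) * (m - 1)" by (simp only: e1)
  moreover have "m - 1 > 0" using m2 by simp
  ultimately have "card S \<le> m + 1" using mult_le_cancel2 by blast
  then show ?thesis unfolding m_def q_def .
qed


theorem theorem4p5:
  fixes C :: "(nat \<Rightarrow> ('a::{field,finite} ^ 'n) set) set" and k :: nat
  assumes "CARD('n) = 2 * k" and "k \<ge> 2"
    and "optimum_distance_full_flag_code k C"
  shows "card C \<le> CARD('a)^k + 1
    \<and> (card C = CARD('a)^k + 1 \<longleftrightarrow> is_spread k (projected_code k C))"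
proof -
  note N = assms(1) and k2 = assms(2)
  have c2: "2 \<le> card C" and ff: "\<forall>F\<in>C. full_flag (2*k) F"
    and md: "flag_code_dist (2*k) C = 2 * k^2"
    using assms(3) unfolding optimum_distance_full_flag_code_def full_flag_code_def by auto
  have fC: "finite C" using c2 card.infinite by fastforce
  define D where "D = {flag_dist (2*k) F G | F G. F \<in> C \<and> G \<in> C \<and> F \<noteq> G}"
  have fD: "finite D"
  proof -
    have "D \<subseteq> (\<lambda>(F,G). flag_dist (2*k) F G) ` (C \<times> C)" unfolding D_def by auto
    then show ?thesis using fC finite_subset by blast
  qed
  have kin: "k \<in> {1..<2*k}" using k2 by auto
  have key: "F k \<inter> G k = {0}" if F: "F \<in> C" and G: "G \<in> C" and ne: "F \<noteq> G" for F G
  proof -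
    define d where "d i = subspace_dist (F i) (G i)" for i
    define b where "b i = 2 * min i (2*k - i)" for i :: nat
    have "flag_dist (2*k) F G \<in> D" unfolding D_def using F G ne by blast
    then have "Min D \<le> flag_dist (2*k) F G" using fD by simp
    moreover have "Min D = 2 * k^2" using md unfolding flag_code_dist_def D_def .
    ultimately have ge: "2 * k^2 \<le> sum d {1..<2*k}"
      unfolding flag_dist_def d_def by simp
    have subi: "vec.subspace (F i) \<and> vec.dim (F i) = i \<and> vec.subspace (G i) \<and> vec.dim (G i) = i"
      if "i \<in> {1..<2*k}" for i
      using ff F G that unfolding full_flag_def by blast
    have le: "d i \<le> b i" if "i \<in> {1..<2*k}" for i
      using dist_bound[of "F i" "G i" i] subi[OF that] N unfolding d_def b_def by simp
    have "sum d {1..<2*k} = d k + sum d ({1..<2*k} - {k})"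
      using kin by (simp add: sum.remove)
    moreover have "sum b {1..<2*k} = b k + sum b ({1..<2*k} - {k})"
      using kin by (simp add: sum.remove)
    moreover have "sum d ({1..<2*k} - {k}) \<le> sum b ({1..<2*k} - {k})"
      by (rule sum_mono) (use le in auto)
    moreover have "sum b {1..<2*k} = 2*k^2" unfolding b_def by (rule sum_min)
    moreover have "b k = 2 * k" unfolding b_def by simp
    ultimately have "d k \<ge> 2 * k" using ge by linarith
    then show ?thesis using dist_full[of "F k" "G k" k] subi[OF kin] N unfolding d_def by simp
  qed
  have dimk: "vec.subspace (F k) \<and> vec.dim (F k) = k" if "F \<in> C" for F
    using ff that kin unfolding full_flag_def by blast
  have inj: "inj_on (\<lambda>F. F k) C"
  proof
    fix F G assume F: "F \<in> C" and G: "G \<in> C" and eq: "F k = G k"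
    show "F = G"
    proof (rule ccontr)
      assume "F \<noteq> G"
      then have "F k = {0}" using key[OF F G] eq by simp
      then have "vec.dim (F k) = 0" by simp
      then show False using dimk[OF F] k2 by simp
    qed
  qed
  have cP: "card (projected_code k C) = card C"
    unfolding projected_code_def using card_image[OF inj] .
  have P1: "\<forall>U\<in>projected_code k C. vec.subspace U \<and> vec.dim U = k"
    unfolding projected_code_def using dimk by blast
  have P2: "\<forall>U\<in>projected_code k C. \<forall>V\<in>projected_code k C. U \<noteq> V \<longrightarrow> U \<inter> V = {0}"
    unfolding projected_code_def using key by blast
  have bound: "card C \<le> CARD('a)^k + 1"
    using partial_spread[OF N _ P1 P2] k2 cP by simp
  show ?thesis
    using bound cP P1 P2 unfolding is_spread_def by auto
qed

end
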